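(* Let $\mathbf{x}=(\mathbf{x}_1,\mathbf{x}_2,\mathbf{x}_3)$ have i.i.d. Bernoulli$(0.5)$ coordinates, and let $\mathbf{y}$ be distributed as follows: if $\mathbf{x}_3=1$, $\mathbf{y}=\mathbf{x}_1$ with probability $0.9$ and $1-\mathbf{x}_1$ otherwise; if $\mathbf{x}_3=0$, $\mathbf{y}=\mathbf{x}_2$ with probability $0.9$ and $1-\mathbf{x}_2$ otherwise. Let $e_{\mathrm{encode}}(\mathbf{x})=\xi_1=[1,0,0]$ if $\mathbf{x}_3=1$ and $\xi_2=[0,1,0]$ otherwise. Then $e_{\mathrm{encode}}$ maximizes $\mathrm{EVAL\text{-}X}(q,e)$ over all reductive explanations $e$ (those with $|e(\mathbf{x})|\le 1$ for all $\mathbf{x}$, i.e. selecting at most one coordinate), and $e_{\mathrm{encode}}$ is encoding.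
   Context: $q$ is the joint distribution of $(\mathbf{y},\mathbf{x})$ just described. An explanation is a map $e$ from inputs to masks in $\{0,1\}^3$; $|e(\mathbf{x})|$ is the number of ones. $\mathbf{x}_{\mathbf{v}}$ denotes the values of the coordinates selected by $\mathbf{v}$; $\mathbf{x}_{e(\mathbf{x})}=(e(\mathbf{x}),\mathbf{x}_{e(\mathbf{x})})$ is written $(\mathbf{v},\mathbf{a})$; $\mathbf{E}_{\mathbf{v}}=\mathbb{1}[e(\mathbf{x})=\mathbf{v}]$. The EVAL-X score is $\mathrm{EVAL\text{-}X}(q,e)=\mathbb{E}_{(\mathbf{v},\mathbf{a})\sim q(\mathbf{x}_{e(\mathbf{x})})}\mathbb{E}_{\mathbf{y}\sim q(\mathbf{y}\mid \mathbf{x}_{e(\mathbf{x})}=(\mathbf{v},\mathbf{a}))}[\log q(\mathbf{y}\mid \mathbf{x}_{\mathbf{v}}=\mathbf{a})]$. $e$ is encoding if there is a set $\mathbf{S}$ of pairs with $q(\mathbf{x}_{e(\mathbf{x})}\in\mathbf{S})>0$ such that for every $(\mathbf{v},\mathbf{a})\in\mathbf{S}$, $\mathbf{y}$ is not conditionally independent of $\mathbf{E}_{\mathbf{v}}$ given $\mathbf{x}_{\mathbf{v}}=\mathbf{a}$. *)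

theory Defs
  imports Complex_Main "HOL-Library.Numeral_Type"
begin

text \<open>Inputs x in {0,1}^3 are functions 3 => bool (coordinate x_1 is index 0,
  x_2 index 1, x_3 index 2); labels y are bool; masks v are also 3 => bool.\<close>

type_synonym inp = "3 \<Rightarrow> bool"

definition qj :: "bool \<Rightarrow> inp \<Rightarrow> real" where
  "qj y x = (1/8) * (if x 2 then (if y = x 0 then 9/10 else 1/10)
                              else (if y = x 1 then 9/10 else 1/10))"

definition Pq :: "(bool \<Rightarrow> inp \<Rightarrow> bool) \<Rightarrow> real" where
  "Pq E = (\<Sum>yx\<in>(UNIV :: (bool \<times> inp) set).
             if E (fst yx) (snd yx) then qj (fst yx) (snd yx) else 0)"

definition sel :: "inp \<Rightarrow> inp \<Rightarrow> inp" where
  "sel v x = (\<lambda>i. if v i then x i else False)"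

definition agrees :: "inp \<Rightarrow> inp \<Rightarrow> inp \<Rightarrow> bool" where
  "agrees v a x \<longleftrightarrow> (\<forall>i. v i \<longrightarrow> x i = a i)"

definition condq :: "bool \<Rightarrow> inp \<Rightarrow> inp \<Rightarrow> real" where
  "condq y v a = Pq (\<lambda>y' x. y' = y \<and> agrees v a x) / Pq (\<lambda>_ x. agrees v a x)"

definition evalx :: "(inp \<Rightarrow> inp) \<Rightarrow> real" where
  "evalx e = (\<Sum>va\<in>(UNIV :: (inp \<times> inp) set).
      Pq (\<lambda>_ x. e x = fst va \<and> sel (fst va) x = snd va) *
      (\<Sum>y\<in>(UNIV :: bool set).
         (Pq (\<lambda>y' x. y' = y \<and> e x = fst va \<and> sel (fst va) x = snd va)
            / Pq (\<lambda>_ x. e x = fst va \<and> sel (fst va) x = snd va))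
         * ln (condq y (fst va) (snd va))))"

text \<open>y is conditionally independent of E_v = [e(x) = v] given x_v = a
  (product form, trivially true when the conditioning event is null).\<close>
definition cond_indep_yE :: "(inp \<Rightarrow> inp) \<Rightarrow> inp \<Rightarrow> inp \<Rightarrow> bool" where
  "cond_indep_yE e v a \<longleftrightarrow>
     (\<forall>y b. Pq (\<lambda>y' x. y' = y \<and> (e x = v) = b \<and> agrees v a x) * Pq (\<lambda>_ x. agrees v a x)
          = Pq (\<lambda>y' x. y' = y \<and> agrees v a x) * Pq (\<lambda>_ x. (e x = v) = b \<and> agrees v a x))"

definition encoding :: "(inp \<Rightarrow> inp) \<Rightarrow> bool" where
  "encoding e \<longleftrightarrow> (\<exists>S. Pq (\<lambda>_ x. (e x, sel (e x) x) \<in> S) > 0 \<and>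
                        (\<forall>(v, a)\<in>S. \<not> cond_indep_yE e v a))"

definition reductive :: "(inp \<Rightarrow> inp) \<Rightarrow> bool" where
  "reductive e \<longleftrightarrow> (\<forall>x. card {i. e x i} \<le> 1)"

definition e_encode :: "inp \<Rightarrow> inp" where
  "e_encode x = (if x 2 then (\<lambda>i. i = 0) else (\<lambda>i. i = 1))"

end

theory Submission imports Defs begin

lemma neq3: "(0::3) \<noteq> 1" "(0::3) \<noteq> 2" "(1::3) \<noteq> 2" "(1::3) \<noteq> 0" "(2::3) \<noteq> 0" "(2::3) \<noteq> 1" by simp_all

lemma cases3: "(i::3) = 0 \<or> i = 1 \<or> i = 2"
proof (cases i)
  case (of_int z)
  then have "z = 0 \<or> z = 1 \<or> z = 2" by auto
  then show ?thesis using of_int by auto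
qed

definition mk :: "bool \<Rightarrow> bool \<Rightarrow> bool \<Rightarrow> inp" where
  "mk a b c = (\<lambda>i. if i = 0 then a else if i = 1 then b else c)"

lemma mk_app[simp]: "mk a b c 0 = a" "mk a b c 1 = b" "mk a b c 2 = c"
  by (simp_all add: mk_def neq3)

lemma x_mk: "x = mk (x 0) (x 1) (x 2)"
proof
  fix i :: 3 show "x i = mk (x 0) (x 1) (x 2) i" using cases3[of i] by auto
qed

lemma sum_pair: "(\<Sum>p\<in>UNIV. h p) = (\<Sum>a\<in>UNIV. \<Sum>b\<in>UNIV. h (a,b))"
  using sum.cartesian_product[of "\<lambda>a b. h (a,b)" UNIV UNIV] by (simp add: UNIV_Times_UNIV)

lemma sum_inp: "(\<Sum>x\<in>(UNIV::inp set). f x) = (\<Sum>a\<in>UNIV. \<Sum>b\<in>UNIV. \<Sum>c\<in>UNIV. f (mk a b c))"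
proof -
  have U: "(UNIV::inp set) = (\<lambda>(a,b,c). mk a b c) ` UNIV"
  proof (rule sym, rule surj_def[THEN iffD2], intro allI)
    fix x :: inp show "\<exists>t. x = (case t of (a,b,c) \<Rightarrow> mk a b c)"
      by (rule exI[of _ "(x 0, x 1, x 2)"]) (simp add: x_mk[symmetric])
  qed
  have I: "inj (\<lambda>(a,b,c). mk a b c)"
  proof (rule injI)
    fix s t :: "bool \<times> bool \<times> bool"
    assume h: "(case s of (a,b,c) \<Rightarrow> mk a b c) = (case t of (a,b,c) \<Rightarrow> mk a b c)"
    obtain a b c where s: "s = (a,b,c)" by (cases s) auto
    obtain a' b' c' where t: "t = (a',b',c')" by (cases t) auto
    have "mk a b c = mk a' b' c'" using h s t by simp
    then have "mk a b c 0 = mk a' b' c' 0" "mk a b c 1 = mk a' b' c' 1" "mk a b c 2 = mk a' b' c' 2"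
      by simp_all
    then show "s = t" using s t by simp
  qed
  have "(\<Sum>x\<in>(UNIV::inp set). f x) = (\<Sum>t\<in>UNIV. f (case t of (a,b,c) \<Rightarrow> mk a b c))"
    by (subst U, subst sum.reindex[OF I]) simp
  also have "\<dots> = (\<Sum>a\<in>UNIV. \<Sum>b\<in>UNIV. \<Sum>c\<in>UNIV. f (mk a b c))"
    by (subst sum_pair, subst sum_pair) simp
  finally show ?thesis .
qed

lemma Pq_expand: "Pq E = (\<Sum>y\<in>UNIV. \<Sum>a\<in>UNIV. \<Sum>b\<in>UNIV. \<Sum>c\<in>UNIV.
    if E y (mk a b c) then qj y (mk a b c) else 0)"
  unfolding Pq_def
  apply (subst sum_pair)
  apply (simp only: fst_conv snd_conv)
  apply (subst sum_inp)
  apply (rule refl)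
  done

lemma condq_mE: "condq y (\<lambda>_. False) a = 1/2"
  unfolding condq_def agrees_def Pq_expand by (cases y) (simp_all add: qj_def UNIV_bool)

lemma condq_m0: "condq y (\<lambda>i. i = 0) a = (if y = a 0 then 7/10 else 3/10)"
  unfolding condq_def agrees_def Pq_expand by (cases y; cases "a 0") (simp_all add: qj_def UNIV_bool)

lemma condq_m1: "condq y (\<lambda>i. i = 1) a = (if y = a 1 then 7/10 else 3/10)"
  unfolding condq_def agrees_def Pq_expand by (cases y; cases "a 1") (simp_all add: qj_def UNIV_bool)

lemma condq_m2: "condq y (\<lambda>i. i = 2) a = 1/2"
  unfolding condq_def agrees_def Pq_expand by (cases y; cases "a 2") (simp_all add: qj_def UNIV_bool)


lemma qj_nonneg: "0 \<le> qj y x" by (simp add: qj_def)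

lemma Pq_nonneg: "0 \<le> Pq E"
  unfolding Pq_def by (rule sum_nonneg) (simp add: qj_nonneg)

lemma Pq_mono: "(\<And>y x. E y x \<Longrightarrow> F y x) \<Longrightarrow> Pq E \<le> Pq F"
  unfolding Pq_def by (rule sum_mono) (auto simp: qj_nonneg)

lemma evalx_eq: "evalx e = (\<Sum>x\<in>UNIV. \<Sum>y\<in>UNIV. qj y x * ln (condq y (e x) (sel (e x) x)))"
proof -
  define P where "P va = Pq (\<lambda>_ x. e x = fst va \<and> sel (fst va) x = snd va)" for va
  define Py where "Py y va = Pq (\<lambda>y' x. y' = y \<and> e x = fst va \<and> sel (fst va) x = snd va)" for y va
  define L where "L y va = ln (condq y (fst va) (snd va))" for y va
  have ev: "evalx e = (\<Sum>va\<in>UNIV. P va * (\<Sum>y\<in>UNIV. (Py y va / P va) * L y va))"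
    unfolding evalx_def P_def Py_def L_def by simp
  have step1: "P va * (\<Sum>y\<in>UNIV. (Py y va / P va) * L y va) = (\<Sum>y\<in>UNIV. Py y va * L y va)" for va
  proof (cases "P va = 0")
    case True
    have "Py y va = 0" for y
    proof -
      have "Py y va \<le> P va" unfolding Py_def P_def by (rule Pq_mono) auto
      moreover have "0 \<le> Py y va" unfolding Py_def by (rule Pq_nonneg)
      ultimately show ?thesis using True by simp
    qed
    then show ?thesis using True by simp
  next
    case False
    then show ?thesis by (simp add: sum_distrib_left)
  qed
  have Pyd: "Py y va = (\<Sum>yx\<in>UNIV. if fst yx = y \<and> e (snd yx) = fst va \<and> sel (fst va) (snd yx) = snd va
      then qj (fst yx) (snd yx) else 0)" for y va
    unfolding Py_def Pq_def by simp
  have "evalx e = (\<Sum>va\<in>UNIV. \<Sum>y\<in>UNIV. Py y va * L y va)"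
    using ev step1 by simp
  also have "\<dots> = (\<Sum>va\<in>UNIV. \<Sum>y\<in>UNIV. \<Sum>yx\<in>UNIV.
      (if fst yx = y \<and> e (snd yx) = fst va \<and> sel (fst va) (snd yx) = snd va
      then qj (fst yx) (snd yx) * L y va else 0))"
    unfolding Pyd sum_distrib_right by (intro sum.cong refl) simp
  also have "\<dots> = (\<Sum>yx\<in>UNIV. \<Sum>va\<in>UNIV. \<Sum>y\<in>UNIV.
      (if fst yx = y \<and> e (snd yx) = fst va \<and> sel (fst va) (snd yx) = snd va
      then qj (fst yx) (snd yx) * L y va else 0))"
    by (subst sum.swap, rule sum.cong[OF refl], rule sum.swap)
  also have "\<dots> = (\<Sum>yx\<in>UNIV. qj (fst yx) (snd yx) * L (fst yx) (e (snd yx), sel (e (snd yx)) (snd yx)))"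
  proof (rule sum.cong[OF refl])
    fix yx :: "bool \<times> inp"
    have "(\<Sum>va\<in>UNIV. \<Sum>y\<in>UNIV.
      (if fst yx = y \<and> e (snd yx) = fst va \<and> sel (fst va) (snd yx) = snd va
      then qj (fst yx) (snd yx) * L y va else 0)) =
      (\<Sum>va\<in>UNIV. if va = (e (snd yx), sel (e (snd yx)) (snd yx)) then
        (\<Sum>y\<in>UNIV. if fst yx = y then qj (fst yx) (snd yx) * L y va else 0) else 0)"
      by (rule sum.cong[OF refl]) (auto simp: prod_eq_iff intro!: sum.neutral)
    also have "\<dots> = qj (fst yx) (snd yx) * L (fst yx) (e (snd yx), sel (e (snd yx)) (snd yx))"
      by simp
    finally show "(\<Sum>va\<in>UNIV. \<Sum>y\<in>UNIV.
      (if fst yx = y \<and> e (snd yx) = fst va \<and> sel (fst va) (snd yx) = snd va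
      then qj (fst yx) (snd yx) * L y va else 0)) =
      qj (fst yx) (snd yx) * L (fst yx) (e (snd yx), sel (e (snd yx)) (snd yx))" .
  qed
  also have "\<dots> = (\<Sum>y\<in>UNIV. \<Sum>x\<in>UNIV. qj y x * ln (condq y (e x) (sel (e x) x)))"
    by (subst sum_pair) (simp add: L_def)
  also have "\<dots> = (\<Sum>x\<in>UNIV. \<Sum>y\<in>UNIV. qj y x * ln (condq y (e x) (sel (e x) x)))"
    by (rule sum.swap)
  finally show ?thesis .
qed


lemma red_mask:
  fixes v :: inp
  assumes "card {i. v i} \<le> 1"
  shows "v = (\<lambda>_. False) \<or> v = (\<lambda>i. i = 0) \<or> v = (\<lambda>i. i = 1) \<or> v = (\<lambda>i. i = 2)"
proof (cases "card {i. v i} = 0")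
  case True
  moreover have "finite {i. v i}" by (rule finite)
  ultimately have "{i. v i} = {}" by simp
  then have "v = (\<lambda>_. False)" by auto
  then show ?thesis by simp
next
  case False
  then have "card {i. v i} = 1" using assms by linarith
  then obtain k where k: "{i. v i} = {k}" by (rule card_1_singletonE)
  then have "v = (\<lambda>i. i = k)" by (auto simp: set_eq_iff)
  then show ?thesis using cases3[of k] by auto
qed

definition G :: "inp \<Rightarrow> inp \<Rightarrow> real" where
  "G v x = (\<Sum>y\<in>UNIV. qj y x * ln (condq y v (sel v x)))"

lemma key1: "10 * ln (1/2) \<le> 9 * ln (7/10) + ln (3/10::real)"
proof -
  have "10 * ln (1/2::real) = ln ((1/2) ^ 10)" by (simp add: ln_realpow)
  also have "\<dots> \<le> ln ((7/10) ^ 9 * (3/10::real))" by (subst ln_le_cancel_iff) (simp_all add: power_divide)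
  also have "\<dots> = 9 * ln (7/10) + ln (3/10::real)" by (subst ln_mult) (simp_all add: ln_realpow)
  finally show ?thesis .
qed

lemma key2: "ln (3/10) < ln (7/10::real)" by simp

lemma G_le:
  assumes "v = (\<lambda>_. False) \<or> v = (\<lambda>i. i = 0) \<or> v = (\<lambda>i. i = 1) \<or> v = (\<lambda>i. i = 2)"
  shows "G v (mk a b c) \<le> G (e_encode (mk a b c)) (mk a b c)"
  using assms
  by (cases a; cases b; cases c; elim disjE; simp add: G_def condq_mE condq_m0 condq_m1 condq_m2
      sel_def qj_def UNIV_bool e_encode_def; insert key1 key2; linarith)

lemma enc_eq: "(e_encode x = (\<lambda>i. i = 0)) = x 2"
proof -
  have "(\<lambda>i::3. i = 1) \<noteq> (\<lambda>i. i = 0)"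
  proof
    assume "(\<lambda>i::3. i = 1) = (\<lambda>i. i = 0)"
    then have "((0::3) = 1) = ((0::3) = 0)" by metis
    then show False by simp
  qed
  then show ?thesis by (simp add: e_encode_def)
qed

theorem lemma6:
  shows "reductive e_encode \<and> (\<forall>e. reductive e \<longrightarrow> evalx e \<le> evalx e_encode)
         \<and> encoding e_encode"
proof (intro conjI allI impI)
  have s: "{i. i = k} = {k}" for k :: 3 by auto
  show "reductive e_encode" unfolding reductive_def e_encode_def by (simp add: s)
next
  fix e assume r: "reductive e"
  have "evalx e = (\<Sum>x\<in>UNIV. G (e x) x)" unfolding evalx_eq G_def by simp
  also have "\<dots> \<le> (\<Sum>x\<in>UNIV. G (e_encode x) x)"
  proof (rule sum_mono)
    fix x :: inp
    have m: "e x = (\<lambda>_. False) \<or> e x = (\<lambda>i. i = 0) \<or> e x = (\<lambda>i. i = 1) \<or> e x = (\<lambda>i. i = 2)"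
      using r unfolding reductive_def by (intro red_mask) simp
    show "G (e x) x \<le> G (e_encode x) x"
      using G_le[OF m, of "x 0" "x 1" "x 2"] by (simp add: x_mk[symmetric])
  qed
  also have "\<dots> = evalx e_encode" unfolding evalx_eq G_def by simp
  finally show "evalx e \<le> evalx e_encode" .
next
  let ?S = "{(\<lambda>i::3. i = 0)} \<times> (UNIV :: inp set)"
  show "encoding e_encode"
    unfolding encoding_def
  proof (rule exI[of _ ?S], intro conjI)
    have "Pq (\<lambda>_ x. (e_encode x, sel (e_encode x) x) \<in> ?S) = Pq (\<lambda>_ x. x 2)"
      by (simp add: enc_eq)
    also have "\<dots> = 1/2" unfolding Pq_expand by (simp add: qj_def UNIV_bool)
    finally show "Pq (\<lambda>_ x. (e_encode x, sel (e_encode x) x) \<in> ?S) > 0" by simp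
  next
    show "\<forall>(v, a)\<in>?S. \<not> cond_indep_yE e_encode v a"
    proof (clarify)
      fix a :: inp
      assume ci: "cond_indep_yE e_encode (\<lambda>i. i = 0) a"
      then have "Pq (\<lambda>y' x. y' = a 0 \<and> (e_encode x = (\<lambda>i. i = 0)) = True \<and> agrees (\<lambda>i. i = 0) a x)
          * Pq (\<lambda>_ x. agrees (\<lambda>i. i = 0) a x)
        = Pq (\<lambda>y' x. y' = a 0 \<and> agrees (\<lambda>i. i = 0) a x)
          * Pq (\<lambda>_ x. (e_encode x = (\<lambda>i. i = 0)) = True \<and> agrees (\<lambda>i. i = 0) a x)"
        unfolding cond_indep_yE_def by blast
      then show False
        unfolding agrees_def enc_eq Pq_expand
        by (cases "a 0") (simp_all add: qj_def UNIV_bool)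
    qed
  qed
qed

end
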